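(* Let $P=P(M_\bullet)\in\mathcal{MV}^\sigma$ and $\hat P=\Phi(P)=\hat P(\hat M_\bullet)$. Then for every $i\in\hat I$, $$c_i(\hat P)=c_i(P),$$ where $c_i(\hat P)=\hat M_{\hat\varpi_i}-\hat M_{\hat s_i\hat\varpi_i}-1$ and $c_i(P)=M_{\varpi_i}-M_{s_i\varpi_i}-1$.
   Context: Setting. $\mathfrak{g}$ is a simply-laced simple Lie algebra of type $A_{2l-1}$ ($l\ge2$), $D_{l+1}$ ($l\ge3$), $D_4$ or $E_6$. $\sigma$ is a nontrivial Dynkin diagram automorphism, i.e. a permutation of $I$ with $c_{\sigma(i)\sigma(j)}=c_{ij}$: - for $A_{2l-1}$: the flip $i\leftrightarrow 2l-i$; - for $D_{l+1}$: the swap of the two short-branch end nodes; - for $D_4$: the order-3 rotation of the three outer nodes; - for $E_6$: the flip. The fixed subalgebra $\hat{\mathfrak g}=\mathfrak g^\sigma$ is simple of type $C_l$, $B_l$, $G_2$, $F_4$ respectively. Its index set $\hat I$ is identified with a set of representatives of the $\sigma$-orbits in $I$. Its Weyl group is $\hat W$, with simple reflections $\hat s_i$, fundamental weights $\hat\varpi_i$, chamber weights $\hat\Gamma=\{\hat w\hat\varpi_i\}$, and coroots $\hat h_i=\sum_t h_{\sigma^t(i)}$. There is an isomorphism $\Theta:\hat W\to W^\sigma$ with $\Theta(\hat s_i)=\prod_{t=0}^{k_i-1}s_{\sigma^t(i)}$, where $k_i$ is the size of the orbit of $i$. MV polytopes. For each Lie algebra, MV polytopes $P(M_\bullet)$ are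 pseudo-Weyl polytopes $\{h:\langle h,\gamma\rangle\ge M_\gamma\ \forall\gamma\}$ whose integer data $M_\bullet$, indexed by chamber weights, satisfy Kamnitzer's edge inequalities and tropical Plücker relations. The GGMS datum $(\mu_w)$ is defined by $\langle\mu_w,w\varpi_i\rangle=M_{w\varpi_i}$. $\mathcal{MV}^\sigma$ is the set of MV polytopes for $\mathfrak g$ with $M_\gamma=M_{\sigma(\gamma)}$ for all $\gamma$. $\Phi:\mathcal{MV}^\sigma\to\hat{\mathcal{MV}}$ sends $P$ with GGMS datum $\mu_\bullet$ to the MV polytope $\hat P$ for $\hat{\mathfrak g}$ with GGMS datum $\hat\mu_{\hat w}=\mu_{\Theta(\hat w)}$. $\hat M_\bullet$ denotes the BZ datum of $\hat P$. *)

theory Defs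
  imports Complex_Main
begin

text \<open>FA l: type A_(2l-1), nodes 1..2l-1, sigma i = 2l-i.
  FD l: type D_(l+1), nodes 1..l+1 (chain 1-...-l, plus edge (l-1)-(l+1)),
        sigma swaps the end nodes l and l+1.
  FD4: type D_4, centre 2, outer nodes 1,3,4, sigma = (1 3 4) of order 3.
  FE6: type E_6 (Bourbaki labelling: chain 1-3-4-5-6, node 2 attached to 4),
        sigma = (1 6)(3 5).\<close>

datatype ftype = FA nat | FD nat | FD4 | FE6

fun valid_type :: "ftype \<Rightarrow> bool" where
  "valid_type (FA l) = (l \<ge> 2)"
| "valid_type (FD l) = (l \<ge> 3)"
| "valid_type FD4 = True"
| "valid_type FE6 = True"

fun rank :: "ftype \<Rightarrow> nat" where
  "rank (FA l) = 2 * l - 1"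
| "rank (FD l) = l + 1"
| "rank FD4 = 4"
| "rank FE6 = 6"

definition nodes :: "ftype \<Rightarrow> nat set" where
  "nodes t = {1..rank t}"

fun adj :: "ftype \<Rightarrow> nat \<Rightarrow> nat \<Rightarrow> bool" where
  "adj (FA l) i j = (i + 1 = j \<or> j + 1 = i)"
| "adj (FD l) i j = (((i + 1 = j \<or> j + 1 = i) \<and> i \<le> l \<and> j \<le> l)
                     \<or> (i = l - 1 \<and> j = l + 1) \<or> (j = l - 1 \<and> i = l + 1))"
| "adj FD4 i j = ((i = 2 \<and> j \<in> {1,3,4}) \<or> (j = 2 \<and> i \<in> {1,3,4}))"
| "adj FE6 i j = ({i,j} \<in> {{1,3},{3,4},{4,5},{5,6},{2,4}})"

definition cartan :: "ftype \<Rightarrow> nat \<Rightarrow> nat \<Rightarrow> int" where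
  "cartan t i j = (if i \<in> nodes t \<and> j \<in> nodes t then
                     (if i = j then 2 else if adj t i j then -1 else 0) else 0)"

fun sigma :: "ftype \<Rightarrow> nat \<Rightarrow> nat" where
  "sigma (FA l) i = (if 1 \<le> i \<and> i \<le> 2 * l - 1 then 2 * l - i else i)"
| "sigma (FD l) i = (if i = l then l + 1 else if i = l + 1 then l else i)"
| "sigma FD4 i = (if i = 1 then 3 else if i = 3 then 4 else if i = 4 then 1 else i)"
| "sigma FE6 i = (if i = 1 then 6 else if i = 6 then 1 else
                   if i = 3 then 5 else if i = 5 then 3 else i)"

text \<open>Chosen representatives of the sigma-orbits: the index set hat I.\<close>
fun reps :: "ftype \<Rightarrow> nat set" where
  "reps (FA l) = {1..l}"
| "reps (FD l) = {1..l}"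
| "reps FD4 = {1,2}"
| "reps FE6 = {1,2,3,4}"

text \<open>Weights are written in the basis of fundamental weights: lambda = sum_j lambda(j) varpi_j.
  Coweights h (elements of the real Cartan) in the basis of simple coroots h_j,
  so that the pairing is <h, lambda> = sum_j h(j) lambda(j).\<close>

type_synonym wt = "nat \<Rightarrow> int"

definition fw :: "nat \<Rightarrow> wt" where
  "fw i = (\<lambda>j. if j = i then 1 else 0)"

text \<open>Simple reflection: s_i lambda = lambda - <h_i,lambda> alpha_i, with alpha_i = sum_j c_ji varpi_j.\<close>
definition sref :: "ftype \<Rightarrow> nat \<Rightarrow> wt \<Rightarrow> wt" where
  "sref t i lam = (\<lambda>j. lam j - lam i * cartan t j i)"

text \<open>Weyl group elements are given by words [i1,...,ik] (= s_i1 ... s_ik).\<close>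
definition act :: "ftype \<Rightarrow> nat list \<Rightarrow> wt \<Rightarrow> wt" where
  "act t ws = foldr (\<lambda>i f. sref t i \<circ> f) ws id"

definition chamber :: "ftype \<Rightarrow> wt set" where
  "chamber t = {act t ws (fw i) | ws i. set ws \<subseteq> nodes t \<and> i \<in> nodes t}"

definition wlen :: "ftype \<Rightarrow> nat list \<Rightarrow> nat" where
  "wlen t ws = (LEAST k. \<exists>vs. set vs \<subseteq> nodes t \<and> length vs = k \<and> act t vs = act t ws)"

definition sig_wt :: "ftype \<Rightarrow> wt \<Rightarrow> wt" where
  "sig_wt t lam = (\<lambda>k. \<Sum>j\<in>{j \<in> nodes t. sigma t j = k}. lam j)"

section \<open>MV polytopes via BZ data (Kamnitzer)\<close>

definition edge_ineqs :: "ftype \<Rightarrow> (wt \<Rightarrow> int) \<Rightarrow> bool" where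
  "edge_ineqs t M \<longleftrightarrow> (\<forall>ws i. set ws \<subseteq> nodes t \<and> i \<in> nodes t \<longrightarrow>
      M (act t ws (fw i)) + M (act t (ws @ [i]) (fw i))
      + (\<Sum>j\<in>nodes t - {i}. cartan t j i * M (act t ws (fw j))) \<le> 0)"

definition tropical_pluecker :: "ftype \<Rightarrow> (wt \<Rightarrow> int) \<Rightarrow> bool" where
  "tropical_pluecker t M \<longleftrightarrow> (\<forall>ws i j. set ws \<subseteq> nodes t \<and> i \<in> nodes t \<and> j \<in> nodes t \<and> i \<noteq> j
      \<and> wlen t (ws @ [i]) > wlen t ws \<and> wlen t (ws @ [j]) > wlen t ws \<and> cartan t i j = -1 \<longrightarrow>
      M (act t (ws @ [i]) (fw i)) + M (act t (ws @ [j]) (fw j)) =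
      min (M (act t ws (fw i)) + M (act t (ws @ [i, j]) (fw j)))
          (M (act t ws (fw j)) + M (act t (ws @ [j, i]) (fw i))))"

text \<open>M (restricted to the chamber weights) is the BZ datum of an MV polytope P(M).\<close>
definition is_MV :: "ftype \<Rightarrow> (wt \<Rightarrow> int) \<Rightarrow> bool" where
  "is_MV t M \<longleftrightarrow> edge_ineqs t M \<and> tropical_pluecker t M"

definition is_MV_sigma :: "ftype \<Rightarrow> (wt \<Rightarrow> int) \<Rightarrow> bool" where
  "is_MV_sigma t M \<longleftrightarrow> is_MV t M \<and> (\<forall>\<gamma>\<in>chamber t. M \<gamma> = M (sig_wt t \<gamma>))"

definition pair :: "ftype \<Rightarrow> (nat \<Rightarrow> real) \<Rightarrow> wt \<Rightarrow> real" where
  "pair t h lam = (\<Sum>j\<in>nodes t. h j * of_int (lam j))"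

definition ggms :: "ftype \<Rightarrow> (wt \<Rightarrow> int) \<Rightarrow> nat list \<Rightarrow> (nat \<Rightarrow> real)" where
  "ggms t M ws = (THE h. (\<forall>j. j \<notin> nodes t \<longrightarrow> h j = 0) \<and>
       (\<forall>i\<in>nodes t. pair t h (act t ws (fw i)) = of_int (M (act t ws (fw i)))))"

definition cP :: "ftype \<Rightarrow> (wt \<Rightarrow> int) \<Rightarrow> nat \<Rightarrow> int" where
  "cP t M i = M (fw i) - M (act t [i] (fw i)) - 1"

definition orb :: "ftype \<Rightarrow> nat \<Rightarrow> nat" where
  "orb t i = (LEAST k. k > 0 \<and> (sigma t ^^ k) i = i)"

text \<open>Cartan matrix of the fixed subalgebra: <hat h_j, hat alpha_i>, where
  hat h_j = sum_t h_(sigma^t j) and hat alpha_i = alpha_i restricted to h^sigma.\<close>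
definition hcartan :: "ftype \<Rightarrow> nat \<Rightarrow> nat \<Rightarrow> int" where
  "hcartan t j i = (if j \<in> reps t \<and> i \<in> reps t then
                      (\<Sum>s<orb t j. cartan t ((sigma t ^^ s) j) i) else 0)"

text \<open>Weights of hat g in the basis of the hat varpi_i (i in reps), same encoding.\<close>
definition hsref :: "ftype \<Rightarrow> nat \<Rightarrow> wt \<Rightarrow> wt" where
  "hsref t i lam = (\<lambda>j. lam j - lam i * hcartan t j i)"

definition hact :: "ftype \<Rightarrow> nat list \<Rightarrow> wt \<Rightarrow> wt" where
  "hact t ws = foldr (\<lambda>i f. hsref t i \<circ> f) ws id"

text \<open>Theta(hat s_i) = prod_(t < k_i) s_(sigma^t i), extended to words.\<close>
definition Theta :: "ftype \<Rightarrow> nat list \<Rightarrow> nat list" where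
  "Theta t ws = concat (map (\<lambda>i. map (\<lambda>s. (sigma t ^^ s) i) [0..<orb t i]) ws)"

text \<open>Pairing of h in h^sigma (coroot coordinates, sigma-invariant) with a weight of hat g:
  h = sum_(j in hat I) h(j) hat h_j.\<close>
definition hpair :: "ftype \<Rightarrow> (nat \<Rightarrow> real) \<Rightarrow> wt \<Rightarrow> real" where
  "hpair t h lam = (\<Sum>j\<in>reps t. h j * of_int (lam j))"

text \<open>GGMS datum of hat P = Phi(P): hat mu_(hat w) = mu_(Theta(hat w)).\<close>
definition hggms :: "ftype \<Rightarrow> (wt \<Rightarrow> int) \<Rightarrow> nat list \<Rightarrow> (nat \<Rightarrow> real)" where
  "hggms t M ws = ggms t M (Theta t ws)"

text \<open>BZ datum of hat P: hat M_(hat w hat varpi_i) = <hat mu_(hat w), hat w hat varpi_i>.\<close>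
definition hatBZ :: "ftype \<Rightarrow> (wt \<Rightarrow> int) \<Rightarrow> nat list \<Rightarrow> nat \<Rightarrow> real" where
  "hatBZ t M ws i = hpair t (hggms t M ws) (hact t ws (fw i))"

definition cPhat :: "ftype \<Rightarrow> (wt \<Rightarrow> int) \<Rightarrow> nat \<Rightarrow> real" where
  "cPhat t M i = hatBZ t M [] i - hatBZ t M [i] i - 1"

end

theory Submission
  imports Defs
begin
lemma finite_nodes[simp]: "finite (nodes t)" by (simp add: nodes_def)

lemma cartan_out: "j \<notin> nodes t \<Longrightarrow> cartan t j i = 0" "i \<notin> nodes t \<Longrightarrow> cartan t j i = 0"
  by (auto simp: cartan_def)

lemma cartan_diag: "k \<in> nodes t \<Longrightarrow> cartan t k k = 2" by (simp add: cartan_def)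

lemma sref_fix: "lam m = 0 \<Longrightarrow> sref t m lam = lam" by (simp add: sref_def)

lemma act_Nil[simp]: "act t [] = id" by (simp add: act_def)
lemma act_Cons[simp]: "act t (m#ws) = sref t m \<circ> act t ws" by (simp add: act_def)

lemma act_fw:
  assumes "distinct ws" "\<forall>a\<in>set ws. \<forall>b\<in>set ws. a \<noteq> b \<longrightarrow> cartan t a b = 0"
  shows "act t ws (fw k) = (if k \<in> set ws then sref t k (fw k) else fw k)"
  using assms
proof (induction ws)
  case Nil then show ?case by simp
next
  case (Cons m ws)
  then have IH: "act t ws (fw k) = (if k \<in> set ws then sref t k (fw k) else fw k)" by simp
  show ?case
  proof (cases "k = m")
    case True
    with Cons.prems have "k \<notin> set ws" by simp
    with IH True show ?thesis by simp
  next
    case False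
    show ?thesis
    proof (cases "k \<in> set ws")
      case True
      have "cartan t m k = 0" using Cons.prems True False by auto
      then have "sref t k (fw k) m = 0" using False by (simp add: sref_def fw_def)
      then show ?thesis using IH True False by (simp add: sref_fix)
    next
      case F2: False
      have "fw k m = 0" using False by (simp add: fw_def)
      then show ?thesis using IH F2 False by (simp add: sref_fix)
    qed
  qed
qed

lemma pair_fw: "k \<in> nodes t \<Longrightarrow> pair t h (fw k) = h k"
  by (simp add: pair_def fw_def if_distrib cong: if_cong)

lemma pair_sref: assumes "k \<in> nodes t"
  shows "pair t h (sref t k (fw k)) = - h k - (\<Sum>j\<in>nodes t - {k}. h j * cartan t j k)"
proof -
  have "pair t h (sref t k (fw k)) = h k * of_int (1 - 2) + (\<Sum>j\<in>nodes t - {k}. h j * of_int (0 - cartan t j k))"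
    unfolding pair_def
    by (subst sum.remove[OF finite_nodes assms]) (auto simp: sref_def fw_def cartan_diag assms intro!: sum.cong)
  then show ?thesis by (simp add: sum_negf)
qed

lemma pair_sref2: assumes "k \<in> nodes t" shows "pair t h (sref t k (fw k)) = h k - (\<Sum>j\<in>nodes t. h j * cartan t j k)"
proof -
  have "pair t h (sref t k (fw k)) = (\<Sum>j\<in>nodes t. h j * fw k j) - (\<Sum>j\<in>nodes t. h j * cartan t j k)"
    unfolding pair_def sref_def by (simp add: fw_def algebra_simps sum_subtractf)
  also have "(\<Sum>j\<in>nodes t. h j * fw k j) = pair t h (fw k)" by (simp add: pair_def)
  finally show ?thesis using pair_fw[OF assms] by simp
qed

definition Hf :: "ftype \<Rightarrow> (wt \<Rightarrow> int) \<Rightarrow> nat list \<Rightarrow> nat \<Rightarrow> real" where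
  "Hf t M Os m = (if m \<notin> nodes t then 0 else if m \<in> set Os then
      of_int (- M (sref t m (fw m)) - (\<Sum>j\<in>nodes t - {m}. cartan t j m * M (fw j)))
      else of_int (M (fw m)))"

definition goodO :: "ftype \<Rightarrow> nat list \<Rightarrow> bool" where
  "goodO t Os \<longleftrightarrow> distinct Os \<and> set Os \<subseteq> nodes t \<and> (\<forall>a\<in>set Os. \<forall>b\<in>set Os. a \<noteq> b \<longrightarrow> cartan t a b = 0)"

lemma sum_H_eq:
  fixes h :: "nat \<Rightarrow> real"
  assumes g: "goodO t Os" and k: "k \<in> set Os"
    and h: "\<And>j. j \<in> nodes t \<Longrightarrow> j \<notin> set Os \<Longrightarrow> h j = of_int (M (fw j))"
  shows "(\<Sum>j\<in>nodes t - {k}. h j * cartan t j k) = of_int (\<Sum>j\<in>nodes t - {k}. cartan t j k * M (fw j))"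
  unfolding of_int_sum
proof (rule sum.cong[OF refl])
  fix j assume j: "j \<in> nodes t - {k}"
  show "h j * cartan t j k = of_int (cartan t j k * M (fw j))"
  proof (cases "j \<in> set Os")
    case True
    then have "cartan t j k = 0" using g k j unfolding goodO_def by auto
    then show ?thesis by simp
  next
    case False then show ?thesis using h j by simp
  qed
qed

lemma Hf_prop:
  assumes g: "goodO t Os" and k: "k \<in> nodes t"
  shows "pair t (Hf t M Os) (act t Os (fw k)) = of_int (M (act t Os (fw k)))"
proof (cases "k \<in> set Os")
  case True
  have a: "act t Os (fw k) = sref t k (fw k)" using act_fw[of Os t k] g True unfolding goodO_def by auto
  have "(\<Sum>j\<in>nodes t - {k}. Hf t M Os j * cartan t j k) = of_int (\<Sum>j\<in>nodes t - {k}. cartan t j k * M (fw j))"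
    using sum_H_eq[OF g True, of "Hf t M Os" M] by (simp add: Hf_def)
  then show ?thesis unfolding a pair_sref[OF k] using k True by (simp add: Hf_def)
next
  case False
  have a: "act t Os (fw k) = fw k" using act_fw[of Os t k] g False unfolding goodO_def by auto
  show ?thesis unfolding a pair_fw[OF k] using k False by (simp add: Hf_def)
qed

lemma ggms_eq:
  assumes g: "goodO t Os"
  shows "ggms t M Os = Hf t M Os"
  unfolding ggms_def
proof (rule the_equality)
  show "(\<forall>j. j \<notin> nodes t \<longrightarrow> Hf t M Os j = 0) \<and>
    (\<forall>i\<in>nodes t. pair t (Hf t M Os) (act t Os (fw i)) = of_int (M (act t Os (fw i))))"
    using Hf_prop[OF g] by (simp add: Hf_def)
next
  fix h assume H: "(\<forall>j. j \<notin> nodes t \<longrightarrow> h j = 0) \<and>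
    (\<forall>i\<in>nodes t. pair t h (act t Os (fw i)) = of_int (M (act t Os (fw i))))"
  have out: "\<And>j. j \<in> nodes t \<Longrightarrow> j \<notin> set Os \<Longrightarrow> h j = of_int (M (fw j))"
  proof -
    fix j assume j: "j \<in> nodes t" "j \<notin> set Os"
    have a: "act t Os (fw j) = fw j" using act_fw[of Os t j] g j unfolding goodO_def by auto
    have "pair t h (act t Os (fw j)) = of_int (M (act t Os (fw j)))" using H j by auto
    then show "h j = of_int (M (fw j))" unfolding a pair_fw[OF j(1)] .
  qed
  show "h = Hf t M Os"
  proof
    fix m
    show "h m = Hf t M Os m"
    proof (cases "m \<in> nodes t")
      case False then show ?thesis using H by (simp add: Hf_def)
    next
      case m: True
      show ?thesis
      proof (cases "m \<in> set Os")
        case False then show ?thesis using out m by (simp add: Hf_def)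
      next
        case True
        have a: "act t Os (fw m) = sref t m (fw m)" using act_fw[of Os t m] g True unfolding goodO_def by auto
        have e: "pair t h (sref t m (fw m)) = of_int (M (sref t m (fw m)))" using H m a by metis
        have "(\<Sum>j\<in>nodes t - {m}. h j * cartan t j m) = of_int (\<Sum>j\<in>nodes t - {m}. cartan t j m * M (fw j))"
          using sum_H_eq[OF g True, of h M] out by blast
        then show ?thesis using e unfolding pair_sref[OF m] using m True by (simp add: Hf_def)
      qed
    qed
  qed
qed

lemma sig_wt_sigma:
  assumes T1: "sigma t ` nodes t \<subseteq> nodes t" "inj_on (sigma t) (nodes t)" and k: "k \<in> nodes t"
  shows "sig_wt t lam (sigma t k) = lam k"
proof -
  have "{j \<in> nodes t. sigma t j = sigma t k} = {k}" using T1 k by (auto dest: inj_onD)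
  then show ?thesis by (simp add: sig_wt_def)
qed

lemma sig_wt_out:
  assumes T1: "sigma t ` nodes t \<subseteq> nodes t" and x: "x \<notin> nodes t"
  shows "sig_wt t lam x = 0"
proof -
  have "{j \<in> nodes t. sigma t j = x} = {}" using T1 x by auto
  then show ?thesis unfolding sig_wt_def by (metis sum.empty)
qed

lemma sigma_surj:
  assumes T1: "sigma t ` nodes t \<subseteq> nodes t" "inj_on (sigma t) (nodes t)"
  shows "sigma t ` nodes t = nodes t"
  using endo_inj_surj[OF finite_nodes T1] .

lemma sig_wt_fw:
  assumes T1: "sigma t ` nodes t \<subseteq> nodes t" "inj_on (sigma t) (nodes t)" and m: "m \<in> nodes t"
  shows "sig_wt t (fw m) = fw (sigma t m)"
proof
  fix x show "sig_wt t (fw m) x = fw (sigma t m) x"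
  proof (cases "x \<in> nodes t")
    case True
    then obtain y where y: "y \<in> nodes t" "x = sigma t y" using sigma_surj[OF T1] by blast
    have "(sigma t y = sigma t m) = (y = m)" using T1(2) y m by (auto dest: inj_onD)
    then show ?thesis using sig_wt_sigma[OF T1 y(1)] y by (simp add: fw_def)
  next
    case False
    have "sigma t m \<in> nodes t" using T1 m by auto
    then show ?thesis using sig_wt_out[OF T1(1) False] False by (auto simp: fw_def)
  qed
qed

lemma sig_wt_sref:
  assumes T1: "sigma t ` nodes t \<subseteq> nodes t" "inj_on (sigma t) (nodes t)" and m: "m \<in> nodes t"
    and T2: "\<And>a b. a \<in> nodes t \<Longrightarrow> b \<in> nodes t \<Longrightarrow> cartan t (sigma t a) (sigma t b) = cartan t a b"
  shows "sig_wt t (sref t m (fw m)) = sref t (sigma t m) (fw (sigma t m))"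
proof
  fix x show "sig_wt t (sref t m (fw m)) x = sref t (sigma t m) (fw (sigma t m)) x"
  proof (cases "x \<in> nodes t")
    case True
    then obtain y where y: "y \<in> nodes t" "x = sigma t y" using sigma_surj[OF T1] by blast
    have "(sigma t y = sigma t m) = (y = m)" using T1(2) y m by (auto dest: inj_onD)
    then show ?thesis using sig_wt_sigma[OF T1 y(1)] y T2[OF y(1) m] by (simp add: fw_def sref_def)
  next
    case False
    have "sigma t m \<in> nodes t" using T1 m by auto
    then show ?thesis using sig_wt_out[OF T1(1) False] False by (auto simp: fw_def sref_def cartan_out)
  qed
qed

lemma fw_chamber: "m \<in> nodes t \<Longrightarrow> fw m \<in> chamber t"
  unfolding chamber_def by (rule CollectI, rule exI[of _ "[]"], auto)

lemma sref_chamber: "m \<in> nodes t \<Longrightarrow> sref t m (fw m) \<in> chamber t"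
  unfolding chamber_def by (rule CollectI, rule exI[of _ "[m]"], auto)

lemma Hf_inv:
  assumes T1: "sigma t ` nodes t \<subseteq> nodes t" "inj_on (sigma t) (nodes t)"
    and T2: "\<And>a b. a \<in> nodes t \<Longrightarrow> b \<in> nodes t \<Longrightarrow> cartan t (sigma t a) (sigma t b) = cartan t a b"
    and cl: "\<forall>m\<in>nodes t. sigma t m \<in> set Os \<longleftrightarrow> m \<in> set Os"
    and MV: "is_MV_sigma t M" and m: "m \<in> nodes t"
  shows "Hf t M Os (sigma t m) = Hf t M Os m"
proof -
  have inv: "\<And>g. g \<in> chamber t \<Longrightarrow> M (sig_wt t g) = M g" using MV unfolding is_MV_sigma_def by auto
  have sm: "sigma t m \<in> nodes t" using T1 m by auto
  have Mfw: "\<And>j. j \<in> nodes t \<Longrightarrow> M (fw (sigma t j)) = M (fw j)"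
    using inv[OF fw_chamber] sig_wt_fw[OF T1] by metis
  have Msr: "M (sref t (sigma t m) (fw (sigma t m))) = M (sref t m (fw m))"
    using inv[OF sref_chamber[OF m]] sig_wt_sref[OF T1 m T2] by metis
  have img: "sigma t ` (nodes t - {m}) = nodes t - {sigma t m}"
    using sigma_surj[OF T1] T1(2) m by (auto simp: inj_on_image_set_diff)
  have inj: "inj_on (sigma t) (nodes t - {m})" using T1(2) by (rule inj_on_subset) auto
  have "(\<Sum>j\<in>nodes t - {sigma t m}. cartan t j (sigma t m) * M (fw j))
      = (\<Sum>j\<in>nodes t - {m}. cartan t (sigma t j) (sigma t m) * M (fw (sigma t j)))"
    unfolding img[symmetric] by (rule sum.reindex[OF inj, unfolded comp_def])
  also have "\<dots> = (\<Sum>j\<in>nodes t - {m}. cartan t j m * M (fw j))"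
    using T2 Mfw m by (intro sum.cong) auto
  finally have S: "(\<Sum>j\<in>nodes t - {sigma t m}. cartan t j (sigma t m) * M (fw j)) = (\<Sum>j\<in>nodes t - {m}. cartan t j m * M (fw j))" .
  show ?thesis using S Msr Mfw[OF m] cl m sm by (simp add: Hf_def)
qed

lemma sigma_pow_nodes:
  assumes "sigma t ` nodes t \<subseteq> nodes t" "m \<in> nodes t"
  shows "(sigma t ^^ s) m \<in> nodes t"
  using assms by (induction s) auto

lemma Hf_inv_pow:
  assumes T1: "sigma t ` nodes t \<subseteq> nodes t" "inj_on (sigma t) (nodes t)"
    and T2: "\<And>a b. a \<in> nodes t \<Longrightarrow> b \<in> nodes t \<Longrightarrow> cartan t (sigma t a) (sigma t b) = cartan t a b"
    and cl: "\<forall>m\<in>nodes t. sigma t m \<in> set Os \<longleftrightarrow> m \<in> set Os"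
    and MV: "is_MV_sigma t M" and m: "m \<in> nodes t"
  shows "Hf t M Os ((sigma t ^^ s) m) = Hf t M Os m"
proof (induction s)
  case 0 then show ?case by simp
next
  case (Suc s)
  have "(sigma t ^^ s) m \<in> nodes t" using sigma_pow_nodes[OF T1(1) m] .
  then show ?case using Hf_inv[OF T1 T2 cl MV] Suc by simp
qed


lemma hpair_fw: "finite (reps t) \<Longrightarrow> i \<in> reps t \<Longrightarrow> hpair t h (fw i) = h i"
  by (simp add: hpair_def fw_def if_distrib cong: if_cong)

lemma main_generic:
  assumes T1: "sigma t ` nodes t \<subseteq> nodes t" "inj_on (sigma t) (nodes t)"
    and T2: "\<And>a b. a \<in> nodes t \<Longrightarrow> b \<in> nodes t \<Longrightarrow> cartan t (sigma t a) (sigma t b) = cartan t a b"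
    and fr: "finite (reps t)" and rn: "reps t \<subseteq> nodes t" and i: "i \<in> reps t"
    and g: "goodO t (Theta t [i])"
    and cl: "\<forall>m\<in>nodes t. sigma t m \<in> set (Theta t [i]) \<longleftrightarrow> m \<in> set (Theta t [i])"
    and iO: "i \<in> set (Theta t [i])"
    and T5: "\<And>f::nat \<Rightarrow> real. (\<Sum>j\<in>reps t. \<Sum>s<orb t j. f ((sigma t ^^ s) j)) = (\<Sum>m\<in>nodes t. f m)"
    and MV: "is_MV_sigma t M"
  shows "cPhat t M i = real_of_int (cP t M i)"
proof -
  define Os where "Os = Theta t [i]"
  define h where "h = Hf t M Os"
  have iN: "i \<in> nodes t" using i rn by auto
  have g0: "goodO t []" by (simp add: goodO_def)
  have h0: "hatBZ t M [] i = M (fw i)"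
    unfolding hatBZ_def hggms_def
    by (simp add: Theta_def hact_def ggms_eq[OF g0] hpair_fw[OF fr i] Hf_def iN)
  have hh: "hggms t M [i] = h" unfolding hggms_def h_def Os_def using ggms_eq[OF g] .
  have hs: "hact t [i] (fw i) = hsref t i (fw i)" by (simp add: hact_def)
  have "hpair t h (hsref t i (fw i)) = (\<Sum>j\<in>reps t. h j * fw i j) - (\<Sum>j\<in>reps t. h j * hcartan t j i)"
    unfolding hpair_def hsref_def by (simp add: fw_def algebra_simps sum_subtractf)
  also have "(\<Sum>j\<in>reps t. h j * fw i j) = h i" using hpair_fw[OF fr i, of h] by (simp add: hpair_def)
  also have "(\<Sum>j\<in>reps t. h j * hcartan t j i) = (\<Sum>j\<in>reps t. \<Sum>s<orb t j. h ((sigma t ^^ s) j) * cartan t ((sigma t ^^ s) j) i)"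
  proof (rule sum.cong[OF refl])
    fix j assume j: "j \<in> reps t"
    have jN: "j \<in> nodes t" using j rn by auto
    have "h j * hcartan t j i = (\<Sum>s<orb t j. h j * cartan t ((sigma t ^^ s) j) i)"
      using j i by (simp add: hcartan_def sum_distrib_left)
    also have "\<dots> = (\<Sum>s<orb t j. h ((sigma t ^^ s) j) * cartan t ((sigma t ^^ s) j) i)"
      unfolding h_def using Hf_inv_pow[OF T1 T2 cl[folded Os_def] MV jN] by simp
    finally show "h j * hcartan t j i = \<dots>" .
  qed
  also have "\<dots> = (\<Sum>m\<in>nodes t. h m * cartan t m i)" by (rule T5)
  finally have e1: "hpair t h (hsref t i (fw i)) = pair t h (sref t i (fw i))" using pair_sref2[OF iN] by simp
  have a: "act t Os (fw i) = sref t i (fw i)" using act_fw[of Os t i] g iO unfolding goodO_def Os_def by auto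
  have e2: "pair t h (sref t i (fw i)) = M (sref t i (fw i))"
    using Hf_prop[OF g[folded Os_def] iN, of M] unfolding a h_def .
  have h1: "hatBZ t M [i] i = M (sref t i (fw i))"
    unfolding hatBZ_def hh hs e1 e2 ..
  show ?thesis unfolding cPhat_def cP_def h0 h1 by simp
qed


lemma orb1: "sigma t j = j \<Longrightarrow> orb t j = 1"
  unfolding orb_def by (rule Least_equality) auto

lemma orb2: "sigma t j \<noteq> j \<Longrightarrow> sigma t (sigma t j) = j \<Longrightarrow> orb t j = 2"
  unfolding orb_def
proof (rule Least_equality)
  assume "sigma t j \<noteq> j" "sigma t (sigma t j) = j"
  then show "0 < (2::nat) \<and> (sigma t ^^ 2) j = j" by (simp add: numeral_eq_Suc)
next
  fix y assume a: "sigma t j \<noteq> j" and "0 < y \<and> (sigma t ^^ y) j = j"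
  then show "2 \<le> y" by (cases y; cases "y - 1") auto
qed

lemma orb3: "sigma t j \<noteq> j \<Longrightarrow> sigma t (sigma t j) \<noteq> j \<Longrightarrow> sigma t (sigma t (sigma t j)) = j \<Longrightarrow> orb t j = 3"
  unfolding orb_def
proof (rule Least_equality)
  assume "sigma t j \<noteq> j" "sigma t (sigma t j) \<noteq> j" "sigma t (sigma t (sigma t j)) = j"
  then show "0 < (3::nat) \<and> (sigma t ^^ 3) j = j" by (simp add: numeral_eq_Suc)
next
  fix y assume a: "sigma t j \<noteq> j" "sigma t (sigma t j) \<noteq> j" and "0 < y \<and> (sigma t ^^ y) j = j"
  then show "3 \<le> y" by (cases y; cases "y - 1"; cases "y - 2") auto
qed

lemma Theta_n: "Theta t [i] = map (\<lambda>s. (sigma t ^^ s) i) [0..<orb t i]"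
  by (simp add: Theta_def)

lemma Theta1: "sigma t j = j \<Longrightarrow> Theta t [j] = [j]"
  by (simp add: Theta_n orb1)
lemma Theta2: "sigma t j \<noteq> j \<Longrightarrow> sigma t (sigma t j) = j \<Longrightarrow> Theta t [j] = [j, sigma t j]"
  by (simp add: Theta_n orb2 upt_rec)
lemma Theta3: "sigma t j \<noteq> j \<Longrightarrow> sigma t (sigma t j) \<noteq> j \<Longrightarrow> sigma t (sigma t (sigma t j)) = j \<Longrightarrow> Theta t [j] = [j, sigma t j, sigma t (sigma t j)]"
  by (simp add: Theta_n orb3 upt_rec)

lemma osum1: "sigma t j = j \<Longrightarrow> (\<Sum>s<orb t j. f ((sigma t ^^ s) j)) = f j"
  by (simp add: orb1)
lemma osum2: "sigma t j \<noteq> j \<Longrightarrow> sigma t (sigma t j) = j \<Longrightarrow> (\<Sum>s<orb t j. f ((sigma t ^^ s) j)) = f j + f (sigma t j)"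
  by (simp add: orb2 numeral_eq_Suc)
lemma osum3: "sigma t j \<noteq> j \<Longrightarrow> sigma t (sigma t j) \<noteq> j \<Longrightarrow> sigma t (sigma t (sigma t j)) = j \<Longrightarrow> (\<Sum>s<orb t j. f ((sigma t ^^ s) j)) = f j + f (sigma t j) + f (sigma t (sigma t j))"
  by (simp add: orb3 numeral_eq_Suc)


lemma FA_T1: "sigma (FA l) ` nodes (FA l) \<subseteq> nodes (FA l)" "inj_on (sigma (FA l)) (nodes (FA l))"
  by (auto simp: nodes_def inj_on_def)

lemma FA_T2:
  assumes a: "a \<in> nodes (FA l)" and b: "b \<in> nodes (FA l)"
  shows "cartan (FA l) (sigma (FA l) a) (sigma (FA l) b) = cartan (FA l) a b"
proof -
  have sa: "sigma (FA l) a = 2*l - a" "sigma (FA l) b = 2*l - b" using a b by (auto simp: nodes_def)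
  have n: "2*l - a \<in> nodes (FA l)" "2*l - b \<in> nodes (FA l)" using a b by (auto simp: nodes_def)
  have e: "(2*l - a = 2*l - b) = (a = b)" using a b by (auto simp: nodes_def)
  have ad: "adj (FA l) (2*l - a) (2*l - b) = adj (FA l) a b" using a b unfolding nodes_def by auto
  show ?thesis unfolding cartan_def sa e ad using n a b by simp
qed

lemma FA_T4:
  assumes l: "2 \<le> l" and i: "i \<in> reps (FA l)"
  shows "goodO (FA l) (Theta (FA l) [i]) \<and> (\<forall>m\<in>nodes (FA l). sigma (FA l) m \<in> set (Theta (FA l) [i]) \<longleftrightarrow> m \<in> set (Theta (FA l) [i])) \<and> i \<in> set (Theta (FA l) [i])"
proof (cases "i = l")
  case True
  have s: "sigma (FA l) l = l" using l by simp
  have "Theta (FA l) [i] = [i]" using True s by (intro Theta1) simp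
  moreover have "\<forall>m\<in>nodes (FA l). sigma (FA l) m = l \<longleftrightarrow> m = l" using l by (auto simp: nodes_def)
  moreover have "l \<in> nodes (FA l)" using l by (simp add: nodes_def)
  ultimately show ?thesis using True by (simp add: goodO_def)
next
  case False
  have il: "1 \<le> i" "i < l" using i False by auto
  have s1: "sigma (FA l) i = 2*l - i" using il by simp
  have r: "1 \<le> 2*l - i \<and> 2*l - i \<le> 2*l - 1" "2*l - (2*l - i) = i" using il by arith+
  have s2: "sigma (FA l) (2*l - i) = i" using r by simp
  have ne: "i \<noteq> 2*l - i" using il by simp
  have T: "Theta (FA l) [i] = [i, 2*l - i]" using Theta2[of "FA l" i] ne unfolding s1 s2 by simp
  have n: "i \<in> nodes (FA l)" "2*l - i \<in> nodes (FA l)" using il by (auto simp: nodes_def)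
  have na: "\<not> adj (FA l) i (2*l - i)" "\<not> adj (FA l) (2*l - i) i" using il by auto
  have c: "cartan (FA l) i (2*l - i) = 0" "cartan (FA l) (2*l - i) i = 0" using na ne n by (auto simp: cartan_def)
  have cl: "\<forall>m\<in>nodes (FA l). (sigma (FA l) m = i \<or> sigma (FA l) m = 2*l - i) \<longleftrightarrow> (m = i \<or> m = 2*l - i)"
    using il by (auto simp: nodes_def)
  show ?thesis unfolding T goodO_def using ne n c cl by auto
qed

lemma FA_T5:
  assumes l: "2 \<le> l"
  shows "(\<Sum>j\<in>reps (FA l). \<Sum>s<orb (FA l) j. f ((sigma (FA l) ^^ s) j)) = (\<Sum>m\<in>nodes (FA l). f m)"
proof -
  have "(\<Sum>j\<in>reps (FA l). \<Sum>s<orb (FA l) j. f ((sigma (FA l) ^^ s) j)) = (\<Sum>j\<in>{1..l}. if j = l then f l else f j + f (2*l - j))"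
  proof (rule sum.cong)
    fix j assume j: "j \<in> {1..l}"
    have s1: "sigma (FA l) j = 2*l - j"
    proof -
      have "1 \<le> j \<and> j \<le> 2*l - 1" using j l by auto
      then show ?thesis by simp
    qed
    have s2: "sigma (FA l) (2*l - j) = j"
    proof -
      have r: "1 \<le> 2*l - j \<and> 2*l - j \<le> 2*l - 1" "2*l - (2*l - j) = j" using j l by auto
      then show ?thesis by simp
    qed
    show "(\<Sum>s<orb (FA l) j. f ((sigma (FA l) ^^ s) j)) = (if j = l then f l else f j + f (2*l - j))"
      using osum1[of "FA l" j f] osum2[of "FA l" j f] j unfolding s1 s2 by auto
  qed simp
  also have "\<dots> = (\<Sum>j\<in>{1..<l}. f j + f (2*l - j)) + f l"
    using l by (simp add: atLeastLessThanSuc_atLeastAtMost[symmetric] sum.atLeastLessThan_Suc[of 1 "l-1", simplified])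
  also have "\<dots> = (\<Sum>j\<in>{1..<l}. f j) + (\<Sum>j\<in>{1..<l}. f (2*l - j)) + f l" by (simp add: sum.distrib)
  also have "(\<Sum>j\<in>{1..<l}. f (2*l - j)) = (\<Sum>m\<in>{l+1..2*l-1}. f m)"
    by (rule sum.reindex_bij_witness[of _ "\<lambda>m. 2*l - m" "\<lambda>j. 2*l - j"]) auto
  also have "(\<Sum>j\<in>{1..<l}. f j) + (\<Sum>m\<in>{l+1..2*l-1}. f m) + f l = (\<Sum>m\<in>{1..2*l-1}. f m)"
  proof -
    have A: "{1..2*l-1} = {1..<l} \<union> {l} \<union> {l+1..2*l-1}" using l by auto
    show ?thesis unfolding A by (subst sum.union_disjoint; auto)+ (simp add: algebra_simps)
  qed
  finally show ?thesis by (simp only: nodes_def rank.simps reps.simps)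
qed


lemma FD_T1: assumes "3 \<le> l" shows "sigma (FD l) ` nodes (FD l) \<subseteq> nodes (FD l)" "inj_on (sigma (FD l)) (nodes (FD l))"
  using assms by (auto simp: nodes_def inj_on_def split: if_splits)

lemma FD_T2:
  assumes l: "3 \<le> l" and a: "a \<in> nodes (FD l)" and b: "b \<in> nodes (FD l)"
  shows "cartan (FD l) (sigma (FD l) a) (sigma (FD l) b) = cartan (FD l) a b"
proof -
  have n: "sigma (FD l) a \<in> nodes (FD l)" "sigma (FD l) b \<in> nodes (FD l)" using a b l by (auto simp: nodes_def)
  have e: "(sigma (FD l) a = sigma (FD l) b) = (a = b)" using a b by (auto simp: nodes_def split: if_splits)
  have ad: "adj (FD l) (sigma (FD l) a) (sigma (FD l) b) = adj (FD l) a b" using a b l unfolding nodes_def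
    by (simp split: if_splits) arith
  show ?thesis unfolding cartan_def e ad using n a b by simp
qed

lemma FD_T4:
  assumes l: "3 \<le> l" and i: "i \<in> reps (FD l)"
  shows "goodO (FD l) (Theta (FD l) [i]) \<and> (\<forall>m\<in>nodes (FD l). sigma (FD l) m \<in> set (Theta (FD l) [i]) \<longleftrightarrow> m \<in> set (Theta (FD l) [i])) \<and> i \<in> set (Theta (FD l) [i])"
proof (cases "i = l")
  case False
  have "Theta (FD l) [i] = [i]" using False l i by (intro Theta1) auto
  then show ?thesis using False l i by (auto simp: goodO_def nodes_def)
next
  case True
  have s1: "sigma (FD l) i = l + 1" using True by simp
  have s2: "sigma (FD l) (l + 1) = i" using True by simp
  have "Theta (FD l) [i] = [i, l + 1]" using True Theta2[of "FD l" i] unfolding s1 s2 by auto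
  then show ?thesis using True l by (auto simp: goodO_def nodes_def cartan_def)
qed

lemma FD_T5:
  assumes l: "3 \<le> l"
  shows "(\<Sum>j\<in>reps (FD l). \<Sum>s<orb (FD l) j. f ((sigma (FD l) ^^ s) j)) = (\<Sum>m\<in>nodes (FD l). f m)"
proof -
  have "(\<Sum>j\<in>reps (FD l). \<Sum>s<orb (FD l) j. f ((sigma (FD l) ^^ s) j)) = (\<Sum>j\<in>{1..l}. if j = l then f l + f (l+1) else f j)"
  proof (rule sum.cong)
    fix j assume j: "j \<in> {1..l}"
    show "(\<Sum>s<orb (FD l) j. f ((sigma (FD l) ^^ s) j)) = (if j = l then f l + f (l+1) else f j)"
      using osum1[of "FD l" j f] osum2[of "FD l" j f] j by auto
  qed simp
  also have "\<dots> = (\<Sum>j\<in>{1..l}. f j) + f (l+1)"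
  proof -
    have "(\<Sum>j\<in>{1..l}. if j = l then f l + f (l+1) else f j) = (\<Sum>j\<in>{1..l}. f j + (if j = l then f (l+1) else 0))"
      by (rule sum.cong) auto
    then show ?thesis using l by (simp add: sum.distrib)
  qed
  also have "\<dots> = (\<Sum>j\<in>{1..l+1}. f j)" by simp
  finally show ?thesis by (simp only: nodes_def rank.simps reps.simps)
qed


lemma nodes_D4: "nodes FD4 = {1,2,3,4}" by (auto simp: nodes_def)
lemma nodes_E6: "nodes FE6 = {1,2,3,4,5,6}" by (auto simp: nodes_def)

lemma D4_T1: "sigma FD4 ` nodes FD4 \<subseteq> nodes FD4" "inj_on (sigma FD4) (nodes FD4)"
  by (auto simp: nodes_D4 inj_on_def)
lemma D4_T2: "a \<in> nodes FD4 \<Longrightarrow> b \<in> nodes FD4 \<Longrightarrow> cartan FD4 (sigma FD4 a) (sigma FD4 b) = cartan FD4 a b"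
  by (auto simp: nodes_D4 cartan_def)
lemma D4_T4:
  assumes i: "i \<in> reps FD4"
  shows "goodO FD4 (Theta FD4 [i]) \<and> (\<forall>m\<in>nodes FD4. sigma FD4 m \<in> set (Theta FD4 [i]) \<longleftrightarrow> m \<in> set (Theta FD4 [i])) \<and> i \<in> set (Theta FD4 [i])"
proof -
  have "i = 1 \<or> i = 2" using i by simp
  then show ?thesis
  proof
    assume "i = 1"
    moreover have "Theta FD4 [1] = [1,3,4]" using Theta3[of FD4 1] by simp
    ultimately show ?thesis by (auto simp: goodO_def nodes_D4 cartan_def)
  next
    assume "i = 2"
    moreover have "Theta FD4 [2] = [2]" using Theta1[of FD4 2] by simp
    ultimately show ?thesis by (auto simp: goodO_def nodes_D4 cartan_def)
  qed
qed
lemma D4_T5: fixes f :: "nat \<Rightarrow> real" shows "(\<Sum>j\<in>reps FD4. \<Sum>s<orb FD4 j. f ((sigma FD4 ^^ s) j)) = (\<Sum>m\<in>nodes FD4. f m)"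
  using osum3[of FD4 1 f] osum1[of FD4 2 f] by (simp add: nodes_D4 algebra_simps)

lemma adj_E6: "adj FE6 i j = ((i = 1 \<and> j = 3) \<or> (i = 3 \<and> j = 1) \<or> (i = 3 \<and> j = 4) \<or> (i = 4 \<and> j = 3) \<or>
   (i = 4 \<and> j = 5) \<or> (i = 5 \<and> j = 4) \<or> (i = 5 \<and> j = 6) \<or> (i = 6 \<and> j = 5) \<or> (i = 2 \<and> j = 4) \<or> (i = 4 \<and> j = 2))"
  by (simp add: doubleton_eq_iff)
lemma E6_T1: "sigma FE6 ` nodes FE6 \<subseteq> nodes FE6" "inj_on (sigma FE6) (nodes FE6)"
  by (auto simp: nodes_E6 inj_on_def)
lemma E6_T2: assumes "a \<in> nodes FE6" "b \<in> nodes FE6" shows "cartan FE6 (sigma FE6 a) (sigma FE6 b) = cartan FE6 a b"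
proof -
  have "a \<in> {1,2,3,4,5,6}" "b \<in> {1,2,3,4,5,6}" using assms by (simp_all add: nodes_E6)
  then show ?thesis unfolding cartan_def adj_E6 nodes_E6 by (elim insertE emptyE; simp)
qed
lemma E6_T4:
  assumes i: "i \<in> reps FE6"
  shows "goodO FE6 (Theta FE6 [i]) \<and> (\<forall>m\<in>nodes FE6. sigma FE6 m \<in> set (Theta FE6 [i]) \<longleftrightarrow> m \<in> set (Theta FE6 [i])) \<and> i \<in> set (Theta FE6 [i])"
proof -
  have T: "Theta FE6 [1] = [1,6]" "Theta FE6 [3] = [3,5]" "Theta FE6 [2] = [2]" "Theta FE6 [4] = [4]"
    using Theta2[of FE6 1] Theta2[of FE6 3] Theta1[of FE6 2] Theta1[of FE6 4] by simp_all
  have c: "cartan FE6 1 6 = 0" "cartan FE6 6 1 = 0" "cartan FE6 3 5 = 0" "cartan FE6 5 3 = 0"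
    unfolding cartan_def adj_E6 by (simp_all add: nodes_E6)
  have "i \<in> {1,2,3,4}" using i by simp
  then show ?thesis using T c by (elim insertE emptyE; simp add: goodO_def nodes_E6)
qed
lemma E6_T5: fixes f :: "nat \<Rightarrow> real" shows "(\<Sum>j\<in>reps FE6. \<Sum>s<orb FE6 j. f ((sigma FE6 ^^ s) j)) = (\<Sum>m\<in>nodes FE6. f m)"
  using osum2[of FE6 1 f] osum2[of FE6 3 f] osum1[of FE6 2 f] osum1[of FE6 4 f] by (simp add: nodes_E6 algebra_simps)
theorem lemma6p4:
  fixes t :: ftype and M :: "wt \<Rightarrow> int" and i :: nat
  assumes "valid_type t"
    and "is_MV_sigma t M"
    and "i \<in> reps t"
  shows "cPhat t M i = real_of_int (cP t M i)"
proof (cases t)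
  case (FA l)
  with assms have l: "2 \<le> l" by simp
  have rn: "reps t \<subseteq> nodes t" using FA l by (auto simp: nodes_def)
  show ?thesis using FA main_generic[OF FA_T1 FA_T2 _ rn[unfolded FA] assms(3)[unfolded FA] _ _ _ FA_T5[OF l] assms(2)[unfolded FA]]
      FA_T4[OF l assms(3)[unfolded FA]] by simp
next
  case (FD l)
  with assms have l: "3 \<le> l" by simp
  have rn: "reps t \<subseteq> nodes t" using FD l by (auto simp: nodes_def)
  show ?thesis using FD main_generic[OF FD_T1[OF l] FD_T2[OF l] _ rn[unfolded FD] assms(3)[unfolded FD] _ _ _ FD_T5[OF l] assms(2)[unfolded FD]]
      FD_T4[OF l assms(3)[unfolded FD]] by simp
next
  case FD4
  have rn: "reps t \<subseteq> nodes t" using FD4 by (auto simp: nodes_D4)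
  show ?thesis using FD4 main_generic[OF D4_T1 D4_T2 _ rn[unfolded FD4] assms(3)[unfolded FD4] _ _ _ D4_T5 assms(2)[unfolded FD4]]
      D4_T4[OF assms(3)[unfolded FD4]] by simp
next
  case FE6
  have rn: "reps t \<subseteq> nodes t" using FE6 by (auto simp: nodes_E6)
  show ?thesis using FE6 main_generic[OF E6_T1 E6_T2 _ rn[unfolded FE6] assms(3)[unfolded FE6] _ _ _ E6_T5 assms(2)[unfolded FE6]]
      E6_T4[OF assms(3)[unfolded FE6]] by simp
qed

end
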